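(* Suppose Assumptions (A2) and (A3) below hold and $x$ is such that $\mathtt{P}_{N_p}^{\mathrm{G}}(x)$ has a feasible solution for the tubes $\mathsf{Z}_k^j=\{z\mid Tz\leq \tau_k^j\}$, $(j,k)\in I_{N_r:N_p-1}$. Then $\mathtt{P}_{N_p}^{\mathrm{G}}(x^+)$ is feasible for all $x^+\in \mathrm{conv}(\{A_i x+B_i u\})\oplus\mathsf W,\,\forall i\in\Gamma_p$, if the control input applied to the system follows the control policy $u=v+K_{\mathrm{inv}}(x-z)$.
   Context: Consider the uncertain linear system $x^+=Ax+Bu+w$ with $(A,B)\in\mathrm{conv}(\{(A_i,B_i),\,i\in\Gamma_p\})$, $\Gamma_p=\{1,\dots,n_p\}$, $w\in\mathsf W$ (convex polytope containing the origin in its interior), polytopic constraints $x\in\mathbb X$, $u\in\mathbb U$. The disturbance set is split as $\mathsf W\subseteq\overline{\mathsf W}\oplus\underline{\mathsf W}$ with $\overline{\mathsf W}=\mathrm{conv}\{w_l,\,l\in\Gamma_{\overline w}\}$ (large) and $\underline{\mathsf W}$ (small). Nominal model $z^+=A_iz+B_iv+w$, $w\in\overline{\mathsf W}$; control $u=v+K_{\mathrm{inv}}(x-z)$; $\mathsf S$ satisfies $(A_i+B_iK_{\mathrm{inv}})\mathsf S\oplus\underline{\mathsf W}\subseteq\mathsf S$; tightened sets $\mathbb Z=\mathbb X\ominus\mathsf S=\{z\mid Fz\le\mathbf 1\}$, $\mathbb V=\mathbb U\ominus K_{\mathrm{inv}}\mathsf S=\{v\mid Gv\le\mathbf 1\}$.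 The tube-enhanced multi-stage MPC problem uses a scenario tree with nodes $z_k^j$ and inputs $v_k^j$ ($I_{k_1:k_2}$ = tree indices at stages $k_1,\dots,k_2$), branching $z_{k+1}^c=A_iz_k^j+B_iv_k^j+w_l$ for all $i,l$ up to the robust horizon $N_r$ with $z_k^j\in\mathbb Z$, $v_k^j\in\mathbb V$, root constraint $x\in\{z_0^1\}\oplus\mathsf S$, and beyond $N_r$ tubes under the policy $v_k^j+K_{\mathrm{pred}}z$. $\mathtt{P}^{\mathrm G}_{N_p}(x)$ is its convex "general complexity tube" implementation: tubes $\mathsf Z_k^j=\{z\mid Tz\le\tau_k^j\}$ with fixed $T$ (such that $\{z\mid Tz\le\mathbf 1\}$ is $\lambda$-contractive) and decision variables $\tau_k^j$; the set inclusions are replaced via Farkas' lemma (for nonempty polytopes, $\{x\mid T_1x\le\tau_1\}\subseteq\{x\mid T_2x\le\tau_2\}$ iff there is a nonnegative $P$ with $PT_1=T_2$, $P\tau_1\le\tau_2$) using nonnegative matrices computed offline with $P_iT=T(A_i+B_iK_{\mathrm{pred}})$, $P_xT=F$, $P_uT=GK_{\mathrm{pred}}$, $P_QT=Q$, giving linear constraints $P_i\tau_k^j+TB_iv_k^j+Tw_l\le\tau_{k+1}^j$, $P_x\tau_k^j\le\mathbf 1$, $Gv_k^j+P_u\tau_k^j\le\mathbf 1$, terminal $P_i\tau_{N_p}^j+Tw_l\le\tau_{N_p}^j$, $Tz_{N_r}^j\le\tau_{N_r}^j$; the worst-case tube stage cost is upper bounded by slack variables $\gamma_k^j$ ($-\mu\le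 P_Q\tau_k^j-Qy_k^j\le\mu$ with $y_k^j\in\mathbb Z_f$, $-\eta\le Rv_k^j\le\eta$, $\mathbf 1^T\mu+\mathbf 1^T\eta\le\gamma_k^j$). (A2) $\mathsf S$ is a convex compact disturbance invariant polytope with $\mathsf S\subset\mathbb X$, $K_{\mathrm{inv}}\mathsf S\subset\mathbb U$ ($\mathsf S=\{0\}$ if $\underline{\mathsf W}=\{0\}$). (A3) $\mathbb Z_f\subseteq\mathbb X\ominus\mathsf S$ is a robust positively invariant polytope containing the origin for the nominal model with $K_f=K_{\mathrm{pred}}$, $K_f\mathbb Z_f\subseteq\mathbb U\ominus K_{\mathrm{inv}}\mathsf S$, and for all tubes $\mathsf Z\subseteq\mathbb Z_f$, $(A_i+B_iK_f)\mathsf Z\oplus\overline{\mathsf W}\subseteq\mathsf Z^+\subseteq\mathbb Z_f$ for all $i$. *)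

theory Defs
  imports "HOL-Analysis.Analysis"
begin

text \<open>Minkowski sum and Pontryagin difference of sets.\<close>
definition msum :: "'a::plus set \<Rightarrow> 'a set \<Rightarrow> 'a set" where
  "msum A B = {a + b | a b. a \<in> A \<and> b \<in> B}"

definition pdiff :: "'a::plus set \<Rightarrow> 'a set \<Rightarrow> 'a set" where
  "pdiff A B = {x. \<forall>b\<in>B. x + b \<in> A}"

text \<open>Entrywise nonnegative matrix.\<close>
definition nonneg_mat :: "real^'c^'r \<Rightarrow> bool" where
  "nonneg_mat P \<longleftrightarrow> (\<forall>a b. 0 \<le> P $ a $ b)"

text \<open>Tube (polytope with fixed shape matrix T) {z | T z <= tau}.\<close>
definition tube :: "real^'n^'q \<Rightarrow> real^'q \<Rightarrow> (real^'n) set" where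
  "tube T tau = {z. T *v z \<le> tau}"

text \<open>Nodes of the scenario tree at stage k (k <= N_r): the sequence of branch labels
  (i,l) (model index i in {1..np}, disturbance vertex index l in {1..nw}) leading from
  the root to the node. The root is the empty list.\<close>
definition scen_paths :: "nat \<Rightarrow> nat \<Rightarrow> nat \<Rightarrow> (nat \<times> nat) list set" where
  "scen_paths np nw k = {p. length p = k \<and> set p \<subseteq> {1..np} \<times> {1..nw}}"

text \<open>(z, v, tau, vt) is a feasible solution of the general complexity tube-enhanced
  multi-stage MPC problem P^G_{Np}(x).
  z p  : nominal node of the tree (length p <= Nr), v p : its input (length p < Nr);
  for every leaf path p (length Nr) and Nr <= k <= Np: tau p k the tube parameter,
  and for Nr <= k < Np: vt p k the tube input (policy vt p k + Kpred z).\<close>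
definition mpcG_solution ::
  "nat \<Rightarrow> nat \<Rightarrow> (nat \<Rightarrow> real^'n^'n) \<Rightarrow> (nat \<Rightarrow> real^'m^'n) \<Rightarrow> (nat \<Rightarrow> real^'n)
   \<Rightarrow> nat \<Rightarrow> nat \<Rightarrow> real^'n^'q \<Rightarrow> real^'n^'f \<Rightarrow> real^'m^'g \<Rightarrow> (real^'n) set
   \<Rightarrow> (nat \<Rightarrow> real^'q^'q) \<Rightarrow> real^'q^'f \<Rightarrow> real^'q^'g \<Rightarrow> real^'q^'r \<Rightarrow> real^'n^'r
   \<Rightarrow> real^'m^'s \<Rightarrow> (real^'n) set \<Rightarrow> real^'n
   \<Rightarrow> ((nat \<times> nat) list \<Rightarrow> real^'n) \<Rightarrow> ((nat \<times> nat) list \<Rightarrow> real^'m)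
   \<Rightarrow> ((nat \<times> nat) list \<Rightarrow> nat \<Rightarrow> real^'q) \<Rightarrow> ((nat \<times> nat) list \<Rightarrow> nat \<Rightarrow> real^'m) \<Rightarrow> bool"
where
  "mpcG_solution np nw A B wv Nr Np T F G S Pm Px Pu PQ Q R Zf x z v tau vt \<longleftrightarrow>
     x \<in> msum {z []} S \<and>
     (\<forall>k<Nr. \<forall>p\<in>scen_paths np nw k.
        F *v z p \<le> 1 \<and> G *v v p \<le> 1 \<and>
        (\<forall>i\<in>{1..np}. \<forall>l\<in>{1..nw}. z (p @ [(i,l)]) = A i *v z p + B i *v v p + wv l)) \<and>
     (\<forall>p\<in>scen_paths np nw Nr.
        T *v z p \<le> tau p Nr \<and>
        (\<forall>k\<in>{Nr..<Np}.
           (\<forall>i\<in>{1..np}. \<forall>l\<in>{1..nw}.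
               Pm i *v tau p k + T *v (B i *v vt p k) + T *v wv l \<le> tau p (Suc k)) \<and>
           Px *v tau p k \<le> 1 \<and>
           G *v vt p k + Pu *v tau p k \<le> 1 \<and>
           (\<exists>y\<in>Zf. \<exists>(mu::real^'r) (eta::real^'s) (gamma::real).
               - mu \<le> PQ *v tau p k - Q *v y \<and> PQ *v tau p k - Q *v y \<le> mu \<and>
               - eta \<le> R *v vt p k \<and> R *v vt p k \<le> eta \<and>
               (\<Sum>a\<in>UNIV. mu $ a) + (\<Sum>b\<in>UNIV. eta $ b) \<le> gamma)) \<and>
        (\<forall>i\<in>{1..np}. \<forall>l\<in>{1..nw}. Pm i *v tau p Np + T *v wv l \<le> tau p Np) \<and>
        Px *v tau p Np \<le> 1 \<and> Pu *v tau p Np \<le> 1)"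

definition mpcG_feasible ::
  "nat \<Rightarrow> nat \<Rightarrow> (nat \<Rightarrow> real^'n^'n) \<Rightarrow> (nat \<Rightarrow> real^'m^'n) \<Rightarrow> (nat \<Rightarrow> real^'n)
   \<Rightarrow> nat \<Rightarrow> nat \<Rightarrow> real^'n^'q \<Rightarrow> real^'n^'f \<Rightarrow> real^'m^'g \<Rightarrow> (real^'n) set
   \<Rightarrow> (nat \<Rightarrow> real^'q^'q) \<Rightarrow> real^'q^'f \<Rightarrow> real^'q^'g \<Rightarrow> real^'q^'r \<Rightarrow> real^'n^'r
   \<Rightarrow> real^'m^'s \<Rightarrow> (real^'n) set \<Rightarrow> real^'n \<Rightarrow> bool"
where
  "mpcG_feasible np nw A B wv Nr Np T F G S Pm Px Pu PQ Q R Zf x \<longleftrightarrow>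
     (\<exists>z v tau vt. mpcG_solution np nw A B wv Nr Np T F G S Pm Px Pu PQ Q R Zf x z v tau vt)"

end

theory Submission
  imports Defs
begin

lemma hull_idx:
  fixes f :: "'i \<Rightarrow> 'a::real_vector"
  assumes "finite I" "y \<in> convex hull (f ` I)"
  shows "\<exists>\<theta>. (\<forall>i\<in>I. 0 \<le> \<theta> i) \<and> sum \<theta> I = 1 \<and> y = (\<Sum>i\<in>I. \<theta> i *\<^sub>R f i)"
proof -
  let ?C = "{y. \<exists>\<theta>. (\<forall>i\<in>I. 0 \<le> \<theta> i) \<and> sum \<theta> I = 1 \<and> y = (\<Sum>i\<in>I. \<theta> i *\<^sub>R f i)}"
  have "f ` I \<subseteq> ?C"
  proof
    fix y assume "y \<in> f ` I"
    then obtain i where i: "i \<in> I" "y = f i" by auto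
    show "y \<in> ?C"
      by (rule CollectI, rule exI[of _ "\<lambda>j. if j = i then 1 else 0"])
         (use i assms(1) in \<open>auto simp: if_distrib[of "\<lambda>a. a *\<^sub>R _"] sum.delta cong: if_cong\<close>)
  qed
  moreover have "convex ?C"
    unfolding convex_def
  proof (intro ballI allI impI)
    fix a b :: 'a and u v :: real
    assume "a \<in> ?C" "b \<in> ?C" and uv: "0 \<le> u" "0 \<le> v" "u + v = 1"
    then obtain \<theta>1 \<theta>2 where t1: "\<forall>i\<in>I. 0 \<le> \<theta>1 i" "sum \<theta>1 I = 1" "a = (\<Sum>i\<in>I. \<theta>1 i *\<^sub>R f i)"
      and t2: "\<forall>i\<in>I. 0 \<le> \<theta>2 i" "sum \<theta>2 I = 1" "b = (\<Sum>i\<in>I. \<theta>2 i *\<^sub>R f i)" by auto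
    show "u *\<^sub>R a + v *\<^sub>R b \<in> ?C"
    proof (rule CollectI, rule exI[of _ "\<lambda>i. u * \<theta>1 i + v * \<theta>2 i"], intro conjI)
      show "\<forall>i\<in>I. 0 \<le> u * \<theta>1 i + v * \<theta>2 i" using t1 t2 uv by auto
      show "(\<Sum>i\<in>I. u * \<theta>1 i + v * \<theta>2 i) = 1"
        using t1 t2 uv by (simp add: sum.distrib sum_distrib_left[symmetric])
      show "u *\<^sub>R a + v *\<^sub>R b = (\<Sum>i\<in>I. (u * \<theta>1 i + v * \<theta>2 i) *\<^sub>R f i)"
        using t1 t2 by (simp add: scaleR_add_left sum.distrib scaleR_sum_right)
    qed
  qed
  ultimately have "convex hull (f ` I) \<subseteq> ?C" by (rule hull_minimal)
  then show ?thesis using assms(2) by blast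
qed

lemma nn_mono:
  assumes "nonneg_mat P" "a \<le> b"
  shows "P *v a \<le> P *v b"
  using assms by (auto simp: less_eq_vec_def matrix_vector_mult_def nonneg_mat_def intro!: sum_mono mult_left_mono)

lemma comb_le:
  fixes f g :: "'e \<Rightarrow> real^'q"
  assumes "\<forall>e\<in>E. 0 \<le> c e" "\<forall>e\<in>E. f e \<le> g e"
  shows "(\<Sum>e\<in>E. c e *\<^sub>R f e) \<le> (\<Sum>e\<in>E. c e *\<^sub>R g e)"
  using assms by (auto simp: less_eq_vec_def intro!: sum_mono mult_left_mono)

lemma comb_const:
  fixes a :: "'a::real_vector"
  assumes "sum c E = 1"
  shows "(\<Sum>e\<in>E. c e *\<^sub>R a) = a"
  using assms by (simp add: scaleR_sum_left[symmetric])

lemma comb_le_const: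
  fixes f :: "'e \<Rightarrow> real^'q"
  assumes "\<forall>e\<in>E. 0 \<le> c e" "sum c E = 1" "\<forall>e\<in>E. f e \<le> b"
  shows "(\<Sum>e\<in>E. c e *\<^sub>R f e) \<le> b"
  using comb_le[OF assms(1,3)] by (simp only: comb_const[OF assms(2)])

lemma mat_comb:
  fixes M :: "real^'a^'b"
  shows "M *v (\<Sum>e\<in>E. c e *\<^sub>R f e) = (\<Sum>e\<in>E. c e *\<^sub>R (M *v f e))"
  by (simp add: linear_sum[OF matrix_vector_mul_linear] matrix_vector_mult_scaleR)

lemma abs_bound:
  fixes d :: "real^'r"
  shows "- (\<chi> a. \<bar>d $ a\<bar>) \<le> d \<and> d \<le> (\<chi> a. \<bar>d $ a\<bar>)"
  by (auto simp: less_eq_vec_def)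

lemma prod_comb:
  fixes a :: "nat \<Rightarrow> 'a::real_vector"
  assumes "finite I" "finite L" "sum \<theta> I = 1" "sum \<mu> L = 1"
  shows "(\<Sum>e\<in>I\<times>L. (\<theta> (fst e) * \<mu> (snd e)) *\<^sub>R (a (fst e) + b (snd e))) =
         (\<Sum>i\<in>I. \<theta> i *\<^sub>R a i) + (\<Sum>l\<in>L. \<mu> l *\<^sub>R b l)"
proof -
  have "(\<Sum>e\<in>I\<times>L. (\<theta> (fst e) * \<mu> (snd e)) *\<^sub>R (a (fst e) + b (snd e))) =
        (\<Sum>i\<in>I. \<Sum>l\<in>L. (\<theta> i * \<mu> l) *\<^sub>R (a i + b l))"
    by (simp add: sum.cartesian_product case_prod_beta')
  also have "\<dots> = (\<Sum>i\<in>I. \<Sum>l\<in>L. \<mu> l *\<^sub>R (\<theta> i *\<^sub>R a i)) + (\<Sum>i\<in>I. \<Sum>l\<in>L. \<theta> i *\<^sub>R (\<mu> l *\<^sub>R b l))"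
    by (simp add: scaleR_add_right sum.distrib mult.commute)
  also have "\<dots> = (\<Sum>i\<in>I. (\<Sum>l\<in>L. \<mu> l) *\<^sub>R (\<theta> i *\<^sub>R a i)) + (\<Sum>l\<in>L. (\<Sum>i\<in>I. \<theta> i) *\<^sub>R (\<mu> l *\<^sub>R b l))"
  proof -
    have e1: "(\<Sum>i\<in>I. \<Sum>l\<in>L. \<mu> l *\<^sub>R (\<theta> i *\<^sub>R a i)) = (\<Sum>i\<in>I. (\<Sum>l\<in>L. \<mu> l) *\<^sub>R (\<theta> i *\<^sub>R a i))"
      by (simp only: scaleR_sum_left)
    have e2: "(\<Sum>i\<in>I. \<Sum>l\<in>L. \<theta> i *\<^sub>R (\<mu> l *\<^sub>R b l)) = (\<Sum>l\<in>L. (\<Sum>i\<in>I. \<theta> i) *\<^sub>R (\<mu> l *\<^sub>R b l))"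
      by (subst sum.swap) (simp only: scaleR_sum_left)
    show ?thesis using e1 e2 by simp
  qed
  also have "\<dots> = (\<Sum>i\<in>I. \<theta> i *\<^sub>R a i) + (\<Sum>l\<in>L. \<mu> l *\<^sub>R b l)"
    using assms by simp
  finally show ?thesis .
qed

theorem corollary1:
  fixes np nw Nr Np :: nat
    and A :: "nat \<Rightarrow> real^'n^'n" and B :: "nat \<Rightarrow> real^'m^'n"
    and wv :: "nat \<Rightarrow> real^'n"
    and W Wbar Wlow X S Zf :: "(real^'n) set" and U :: "(real^'m) set"
    and Kinv Kpred :: "real^'n^'m"
    and T :: "real^'n^'q" and F :: "real^'n^'f" and G :: "real^'m^'g"
    and Q :: "real^'n^'r" and R :: "real^'m^'s"
    and Pm :: "nat \<Rightarrow> real^'q^'q" and Px :: "real^'q^'f" and Pu :: "real^'q^'g"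
    and PQ :: "real^'q^'r"
    and lam :: real
    and x :: "real^'n"
    and z :: "(nat \<times> nat) list \<Rightarrow> real^'n" and v :: "(nat \<times> nat) list \<Rightarrow> real^'m"
    and tau :: "(nat \<times> nat) list \<Rightarrow> nat \<Rightarrow> real^'q"
    and vt :: "(nat \<times> nat) list \<Rightarrow> nat \<Rightarrow> real^'m"
  assumes np: "1 \<le> np" and nw: "1 \<le> nw" and horizons: "1 \<le> Nr" "Nr \<le> Np"
    \<comment> \<open>disturbance set and its splitting\<close>
    and W_polytope: "polytope W" and W_interior: "0 \<in> interior W"
    and W_split: "W \<subseteq> msum Wbar Wlow"
    and Wbar_def: "Wbar = convex hull (wv ` {1..nw})"
    \<comment> \<open>polytopic constraint sets and tightened sets\<close>
    and X_polytope: "polytope X" and U_polytope: "polytope U"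
    and Z_eq: "{zz. F *v zz \<le> 1} = pdiff X S"
    and V_eq: "{vv. G *v vv \<le> 1} = pdiff U ((*v) Kinv ` S)"
    \<comment> \<open>(A2)\<close>
    and S_polytope: "polytope S" and S_convex: "convex S" and S_compact: "compact S"
    and S_inv: "\<forall>i\<in>{1..np}. msum ((*v) (A i + B i ** Kinv) ` S) Wlow \<subseteq> S"
    and S_X: "S \<subseteq> X" and S_U: "(*v) Kinv ` S \<subseteq> U"
    and S_zero: "Wlow = {0} \<Longrightarrow> S = {0}"
    \<comment> \<open>(A3)\<close>
    and Zf_polytope: "polytope Zf" and Zf_sub: "Zf \<subseteq> pdiff X S" and Zf_0: "0 \<in> Zf"
    and Zf_rpi: "\<forall>i\<in>{1..np}. msum ((*v) (A i + B i ** Kpred) ` Zf) Wbar \<subseteq> Zf"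
    and Zf_input: "(*v) Kpred ` Zf \<subseteq> pdiff U ((*v) Kinv ` S)"
    and Zf_tubes: "\<forall>t. tube T t \<subseteq> Zf \<longrightarrow>
                     (\<exists>t'. (\<forall>i\<in>{1..np}. msum ((*v) (A i + B i ** Kpred) ` tube T t) Wbar \<subseteq> tube T t')
                          \<and> tube T t' \<subseteq> Zf)"
    \<comment> \<open>lambda-contractive tube shape\<close>
    and lam: "0 \<le> lam" "lam < 1"
    and T_contr: "\<forall>i\<in>{1..np}. (*v) (A i + B i ** Kpred) ` tube T 1 \<subseteq> (\<lambda>y. lam *\<^sub>R y) ` tube T 1"
    \<comment> \<open>offline Farkas matrices\<close>
    and Pm_nn: "\<forall>i\<in>{1..np}. nonneg_mat (Pm i)"
    and Pm_eq: "\<forall>i\<in>{1..np}. Pm i ** T = T ** (A i + B i ** Kpred)"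
    and Px_nn: "nonneg_mat Px" and Px_eq: "Px ** T = F"
    and Pu_nn: "nonneg_mat Pu" and Pu_eq: "Pu ** T = G ** Kpred"
    and PQ_nn: "nonneg_mat PQ" and PQ_eq: "PQ ** T = Q"
    \<comment> \<open>feasible solution of P^G_Np(x)\<close>
    and sol: "mpcG_solution np nw A B wv Nr Np T F G S Pm Px Pu PQ Q R Zf x z v tau vt"
  shows "\<forall>xp \<in> msum (convex hull {A i *v x + B i *v (v [] + Kinv *v (x - z [])) | i. i \<in> {1..np}}) W.
           mpcG_feasible np nw A B wv Nr Np T F G S Pm Px Pu PQ Q R Zf xp"
proof (intro ballI)
  fix xp assume xp: "xp \<in> msum (convex hull {A i *v x + B i *v (v [] + Kinv *v (x - z [])) | i. i \<in> {1..np}}) W"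
  define I where "I = {1..np}"
  define L where "L = {1..nw}"
  define E where "E = I \<times> L"
  have fin: "finite I" "finite L" "finite E" by (auto simp: I_def L_def E_def)
  from sol have root: "x \<in> msum {z []} S"
    and tree: "\<forall>k<Nr. \<forall>p\<in>scen_paths np nw k. F *v z p \<le> 1 \<and> G *v v p \<le> 1 \<and>
        (\<forall>i\<in>{1..np}. \<forall>l\<in>{1..nw}. z (p @ [(i,l)]) = A i *v z p + B i *v v p + wv l)"
    and leaf: "\<forall>p\<in>scen_paths np nw Nr. T *v z p \<le> tau p Nr \<and>
        (\<forall>k\<in>{Nr..<Np}.
           (\<forall>i\<in>{1..np}. \<forall>l\<in>{1..nw}.
               Pm i *v tau p k + T *v (B i *v vt p k) + T *v wv l \<le> tau p (Suc k)) \<and>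
           Px *v tau p k \<le> 1 \<and>
           G *v vt p k + Pu *v tau p k \<le> 1) \<and>
        (\<forall>i\<in>{1..np}. \<forall>l\<in>{1..nw}. Pm i *v tau p Np + T *v wv l \<le> tau p Np) \<and>
        Px *v tau p Np \<le> 1 \<and> Pu *v tau p Np \<le> 1"
    unfolding mpcG_solution_def by blast+
  obtain h w where h: "h \<in> convex hull {A i *v x + B i *v (v [] + Kinv *v (x - z [])) | i. i \<in> {1..np}}"
    and w: "w \<in> W" and xpd: "xp = h + w"
    using xp unfolding msum_def by blast
  let ?f = "\<lambda>i. A i *v x + B i *v (v [] + Kinv *v (x - z []))"
  have "{A i *v x + B i *v (v [] + Kinv *v (x - z [])) | i. i \<in> {1..np}} = ?f ` I"
    by (auto simp: I_def)
  with h have "h \<in> convex hull (?f ` I)" by simp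
  then obtain \<theta> where th: "\<forall>i\<in>I. 0 \<le> \<theta> i" "sum \<theta> I = 1" "h = (\<Sum>i\<in>I. \<theta> i *\<^sub>R ?f i)"
    using hull_idx[OF fin(1)] by blast
  obtain wb wlo where wb: "wb \<in> Wbar" "wlo \<in> Wlow" "w = wb + wlo"
    using W_split w unfolding msum_def by blast
  have "wb \<in> convex hull (wv ` L)" using wb(1) Wbar_def L_def by simp
  then obtain \<mu> where mu: "\<forall>l\<in>L. 0 \<le> \<mu> l" "sum \<mu> L = 1" "wb = (\<Sum>l\<in>L. \<mu> l *\<^sub>R wv l)"
    using hull_idx[OF fin(2)] by blast
  define c where "c = (\<lambda>e::nat\<times>nat. \<theta> (fst e) * \<mu> (snd e))"
  have c_nn: "\<forall>e\<in>E. 0 \<le> c e" using th(1) mu(1) by (auto simp: c_def E_def)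
  have "sum c E = (\<Sum>i\<in>I. \<Sum>l\<in>L. \<theta> i * \<mu> l)"
    by (simp add: c_def E_def sum.cartesian_product case_prod_beta')
  also have "\<dots> = 1" using th(2) mu(2) by (simp add: sum_distrib_left[symmetric])
  finally have c_sum: "sum c E = 1" .
  note cc = comb_const[OF c_sum]
  define vN where "vN = (\<lambda>q. if Nr < Np then vt q Nr else 0)"
  define zc where "zc = (\<lambda>p. \<Sum>e\<in>E. c e *\<^sub>R z (e # p))"
  define vc where "vc = (\<lambda>p. if Suc (length p) < Nr then (\<Sum>e\<in>E. c e *\<^sub>R v (e # p))
                     else (\<Sum>e\<in>E. c e *\<^sub>R (vN (e # p) + Kpred *v z (e # p))))"
  define z' where "z' = (\<lambda>p. if length p < Nr then zc p
                     else A (fst (last p)) *v zc (butlast p) + B (fst (last p)) *v vc (butlast p) + wv (snd (last p)))"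
  define tau' where "tau' = (\<lambda>p k. \<Sum>e\<in>E. c e *\<^sub>R tau (e # butlast p) (min (Suc k) Np))"
  define vt' where "vt' = (\<lambda>p k. \<Sum>e\<in>E. c e *\<^sub>R (if Suc k < Np then vt (e # butlast p) (Suc k) else 0))"
  have cons_path: "\<And>p k e. p \<in> scen_paths np nw k \<Longrightarrow> e \<in> E \<Longrightarrow> e # p \<in> scen_paths np nw (Suc k)"
    by (auto simp: scen_paths_def E_def I_def L_def)
  have Pxq: "\<And>q j. q \<in> scen_paths np nw Nr \<Longrightarrow> Nr \<le> j \<Longrightarrow> j \<le> Np \<Longrightarrow> Px *v tau q j \<le> 1"
  proof -
    fix q j assume q: "q \<in> scen_paths np nw Nr" and j: "Nr \<le> j" "j \<le> Np"
    show "Px *v tau q j \<le> 1"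
    proof (cases "j < Np")
      case True then show ?thesis using leaf q j by auto
    next
      case False then have "j = Np" using j by simp
      then show ?thesis using leaf q by auto
    qed
  qed
  have FzN: "\<And>q. q \<in> scen_paths np nw Nr \<Longrightarrow> F *v z q \<le> 1"
  proof -
    fix q assume q: "q \<in> scen_paths np nw Nr"
    have "F *v z q = Px *v (T *v z q)" by (simp add: matrix_vector_mul_assoc Px_eq)
    also have "\<dots> \<le> Px *v tau q Nr" using leaf q Px_nn nn_mono by blast
    also have "\<dots> \<le> 1" using Pxq[OF q] horizons by simp
    finally show "F *v z q \<le> 1" .
  qed
  have GzN: "\<And>q. q \<in> scen_paths np nw Nr \<Longrightarrow> G *v (vN q + Kpred *v z q) \<le> 1"
  proof -
    fix q assume q: "q \<in> scen_paths np nw Nr"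
    have "G *v (vN q + Kpred *v z q) = G *v vN q + Pu *v (T *v z q)"
      by (simp add: matrix_vector_right_distrib matrix_vector_mul_assoc Pu_eq)
    also have "\<dots> \<le> G *v vN q + Pu *v tau q Nr"
      using leaf q Pu_nn nn_mono add_left_mono by blast
    also have "\<dots> \<le> 1"
    proof (cases "Nr < Np")
      case True then show ?thesis using leaf q by (auto simp: vN_def)
    next
      case False then have "Nr = Np" using horizons by simp
      then show ?thesis using leaf q False by (auto simp: vN_def)
    qed
    finally show "G *v (vN q + Kpred *v z q) \<le> 1" .
  qed
  have TPm: "\<And>i y. i \<in> {1..np} \<Longrightarrow> T *v ((A i + B i ** Kpred) *v y) = Pm i *v (T *v y)"
    using Pm_eq by (simp add: matrix_vector_mul_assoc)
  have lin3: "\<And>i y vv w. A i *v y + B i *v (vv + Kpred *v y) + w = (A i + B i ** Kpred) *v y + B i *v vv + w"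
    by (simp add: matrix_vector_right_distrib matrix_vector_mult_add_rdistrib matrix_vector_mul_assoc)
  show "mpcG_feasible np nw A B wv Nr Np T F G S Pm Px Pu PQ Q R Zf xp"
    unfolding mpcG_feasible_def
  proof (intro exI)
    show "mpcG_solution np nw A B wv Nr Np T F G S Pm Px Pu PQ Q R Zf xp z' vc tau' vt'"
      unfolding mpcG_solution_def
    proof (intro conjI)
      show "xp \<in> msum {z' []} S"
      proof -
        obtain s where s: "s \<in> S" "x = z [] + s" using root unfolding msum_def by blast
        have path0: "[] \<in> scen_paths np nw 0" by (simp add: scen_paths_def)
        have Nr0: "0 < Nr" using horizons by simp
        have zE: "z (e # []) = (A (fst e) *v z [] + B (fst e) *v v []) + wv (snd e)" if e: "e \<in> E" for e
        proof -
          have "\<forall>i\<in>{1..np}. \<forall>l\<in>{1..nw}. z ([] @ [(i,l)]) = A i *v z [] + B i *v v [] + wv l"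
            using tree Nr0 path0 by blast
          then have "z ([] @ [(fst e, snd e)]) = A (fst e) *v z [] + B (fst e) *v v [] + wv (snd e)"
            using e by (auto simp: E_def I_def L_def)
          then show ?thesis by simp
        qed
        have "z' [] = zc []" using Nr0 by (simp add: z'_def)
        also have "\<dots> = (\<Sum>e\<in>E. c e *\<^sub>R ((A (fst e) *v z [] + B (fst e) *v v []) + wv (snd e)))"
          unfolding zc_def using zE by (intro sum.cong) auto
        also have "\<dots> = (\<Sum>i\<in>I. \<theta> i *\<^sub>R (A i *v z [] + B i *v v [])) + (\<Sum>l\<in>L. \<mu> l *\<^sub>R wv l)"
          unfolding c_def E_def by (rule prod_comb[OF fin(1,2) th(2) mu(2)])
        finally have z0: "z' [] = (\<Sum>i\<in>I. \<theta> i *\<^sub>R (A i *v z [] + B i *v v [])) + wb"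
          using mu(3) by simp
        have fi: "?f i = (A i *v z [] + B i *v v []) + (A i + B i ** Kinv) *v s" for i
          by (simp add: s(2) algebra_simps matrix_vector_mul_assoc)
        have hh: "h = (\<Sum>i\<in>I. \<theta> i *\<^sub>R (A i *v z [] + B i *v v [])) + (\<Sum>i\<in>I. \<theta> i *\<^sub>R ((A i + B i ** Kinv) *v s))"
          unfolding th(3) fi by (simp add: scaleR_add_right sum.distrib)
        define s' where "s' = (\<Sum>i\<in>I. \<theta> i *\<^sub>R ((A i + B i ** Kinv) *v s + wlo))"
        have s'eq: "s' = (\<Sum>i\<in>I. \<theta> i *\<^sub>R ((A i + B i ** Kinv) *v s)) + wlo"
          unfolding s'_def by (simp add: scaleR_add_right sum.distrib comb_const[OF th(2)])
        have "s' \<in> S"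
          unfolding s'_def
        proof (rule convex_sum[OF fin(1) S_convex th(2)])
          show "\<And>i. i \<in> I \<Longrightarrow> 0 \<le> \<theta> i" using th(1) by blast
          fix i assume i: "i \<in> I"
          have "(A i + B i ** Kinv) *v s + wlo \<in> msum ((*v) (A i + B i ** Kinv) ` S) Wlow"
            unfolding msum_def using s(1) wb(2) by blast
          then show "(A i + B i ** Kinv) *v s + wlo \<in> S" using S_inv i I_def by blast
        qed
        moreover have "xp = z' [] + s'"
          unfolding xpd wb(3) hh z0 s'eq by (simp add: algebra_simps)
        ultimately show ?thesis unfolding msum_def by blast
      qed
      show "\<forall>k<Nr. \<forall>p\<in>scen_paths np nw k. F *v z' p \<le> 1 \<and> G *v vc p \<le> 1 \<and>
        (\<forall>i\<in>{1..np}. \<forall>l\<in>{1..nw}. z' (p @ [(i,l)]) = A i *v z' p + B i *v vc p + wv l)"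
      proof (intro allI impI ballI)
        fix k p assume k: "k < Nr" and p: "p \<in> scen_paths np nw k"
        have lp: "length p = k" using p by (simp add: scen_paths_def)
        have qp: "\<And>e. e \<in> E \<Longrightarrow> e # p \<in> scen_paths np nw (Suc k)" using cons_path p by blast
        have z'p: "z' p = zc p" using k lp by (simp add: z'_def)
        have "F *v z' p \<le> 1"
        proof -
          have "F *v z' p = (\<Sum>e\<in>E. c e *\<^sub>R (F *v z (e # p)))" by (simp add: z'p zc_def mat_comb)
          also have "\<dots> \<le> 1"
          proof (rule comb_le_const[OF c_nn c_sum], intro ballI)
            fix e assume e: "e \<in> E"
            show "F *v z (e # p) \<le> 1"
            proof (cases "Suc k < Nr")
              case True then show ?thesis using tree qp[OF e] by blast
            next
              case False then have "Suc k = Nr" using k by simp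
              then show ?thesis using FzN qp[OF e] by metis
            qed
          qed
          finally show ?thesis .
        qed
        moreover have "G *v vc p \<le> 1"
        proof (cases "Suc k < Nr")
          case True
          have "G *v vc p = (\<Sum>e\<in>E. c e *\<^sub>R (G *v v (e # p)))" using True lp by (simp add: vc_def mat_comb)
          also have "\<dots> \<le> 1" using tree qp True by (intro comb_le_const[OF c_nn c_sum]) blast
          finally show ?thesis .
        next
          case False then have Nk: "Suc k = Nr" using k by simp
          have "G *v vc p = (\<Sum>e\<in>E. c e *\<^sub>R (G *v (vN (e # p) + Kpred *v z (e # p))))" using False lp by (simp add: vc_def mat_comb)
          also have "\<dots> \<le> 1" using GzN qp Nk by (intro comb_le_const[OF c_nn c_sum]) metis
          finally show ?thesis .
        qed
        moreover have "\<forall>i\<in>{1..np}. \<forall>l\<in>{1..nw}. z' (p @ [(i,l)]) = A i *v z' p + B i *v vc p + wv l"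
        proof (intro ballI)
          fix i l assume i: "i \<in> {1..np}" and l: "l \<in> {1..nw}"
          show "z' (p @ [(i,l)]) = A i *v z' p + B i *v vc p + wv l"
          proof (cases "Suc k < Nr")
            case True
            have dyn: "z ((e # p) @ [(i,l)]) = A i *v z (e # p) + B i *v v (e # p) + wv l" if e: "e \<in> E" for e
              using tree True qp[OF e] i l by blast
            have "z' (p @ [(i,l)]) = (\<Sum>e\<in>E. c e *\<^sub>R z ((e # p) @ [(i,l)]))"
              using True lp by (simp add: z'_def zc_def)
            also have "\<dots> = (\<Sum>e\<in>E. c e *\<^sub>R (A i *v z (e # p) + B i *v v (e # p) + wv l))"
              using dyn by (intro sum.cong) auto
            also have "\<dots> = A i *v z' p + B i *v vc p + wv l"
              using True lp by (simp add: z'p zc_def vc_def mat_comb scaleR_add_right sum.distrib cc)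
            finally show ?thesis .
          next
            case False then have "Suc k = Nr" using k by simp
            then show ?thesis using lp z'p by (simp add: z'_def)
          qed
        qed
        ultimately show "F *v z' p \<le> 1 \<and> G *v vc p \<le> 1 \<and>
          (\<forall>i\<in>{1..np}. \<forall>l\<in>{1..nw}. z' (p @ [(i,l)]) = A i *v z' p + B i *v vc p + wv l)" by blast
      qed
      show "\<forall>p\<in>scen_paths np nw Nr.
        T *v z' p \<le> tau' p Nr \<and>
        (\<forall>k\<in>{Nr..<Np}.
           (\<forall>i\<in>{1..np}. \<forall>l\<in>{1..nw}.
               Pm i *v tau' p k + T *v (B i *v vt' p k) + T *v wv l \<le> tau' p (Suc k)) \<and>
           Px *v tau' p k \<le> 1 \<and>
           G *v vt' p k + Pu *v tau' p k \<le> 1 \<and>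
           (\<exists>y\<in>Zf. \<exists>(mu::real^'r) (eta::real^'s) (gamma::real).
               - mu \<le> PQ *v tau' p k - Q *v y \<and> PQ *v tau' p k - Q *v y \<le> mu \<and>
               - eta \<le> R *v vt' p k \<and> R *v vt' p k \<le> eta \<and>
               (\<Sum>a\<in>UNIV. mu $ a) + (\<Sum>b\<in>UNIV. eta $ b) \<le> gamma)) \<and>
        (\<forall>i\<in>{1..np}. \<forall>l\<in>{1..nw}. Pm i *v tau' p Np + T *v wv l \<le> tau' p Np) \<and>
        Px *v tau' p Np \<le> 1 \<and> Pu *v tau' p Np \<le> 1"
      proof (intro ballI)
        fix p assume p: "p \<in> scen_paths np nw Nr"
        define pb where "pb = butlast p"
        define i0 where "i0 = fst (last p)"
        define l0 where "l0 = snd (last p)"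
        have lp: "length p = Nr" using p by (simp add: scen_paths_def)
        have pne: "p \<noteq> []" using lp horizons by auto
        have "last p \<in> set p" using pne by simp
        then have lastE: "last p \<in> I \<times> L" using p by (auto simp: scen_paths_def I_def L_def)
        have i0: "i0 \<in> {1..np}" and l0: "l0 \<in> {1..nw}"
          using lastE by (auto simp: i0_def l0_def I_def L_def mem_Times_iff)
        have lpb: "Suc (length pb) = Nr" using lp horizons by (simp add: pb_def)
        have pbp: "pb \<in> scen_paths np nw (length pb)" using p
          by (auto simp: pb_def scen_paths_def dest: in_set_butlastD)
        have qE: "\<And>e. e \<in> E \<Longrightarrow> e # pb \<in> scen_paths np nw Nr"
          using cons_path[OF pbp] lpb by metis
        have tau'p: "\<And>k. tau' p k = (\<Sum>e\<in>E. c e *\<^sub>R tau (e # pb) (min (Suc k) Np))"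
          by (simp add: tau'_def pb_def)
        have vt'p: "\<And>k. vt' p k = (\<Sum>e\<in>E. c e *\<^sub>R (if Suc k < Np then vt (e # pb) (Suc k) else 0))"
          unfolding vt'_def pb_def by (rule refl)
        \<comment> \<open>initial tube\<close>
        have tube0: "T *v z' p \<le> tau' p Nr"
        proof -
          have "z' p = A i0 *v zc pb + B i0 *v vc pb + wv l0"
            using lp by (simp add: z'_def i0_def l0_def pb_def)
          also have "\<dots> = (\<Sum>e\<in>E. c e *\<^sub>R (A i0 *v z (e # pb) + B i0 *v (vN (e # pb) + Kpred *v z (e # pb)) + wv l0))"
            using lpb by (simp add: zc_def vc_def mat_comb matrix_vector_right_distrib scaleR_add_right sum.distrib cc)
          finally have "T *v z' p = (\<Sum>e\<in>E. c e *\<^sub>R (T *v (A i0 *v z (e # pb) + B i0 *v (vN (e # pb) + Kpred *v z (e # pb)) + wv l0)))"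
            by (simp add: mat_comb)
          also have "\<dots> \<le> (\<Sum>e\<in>E. c e *\<^sub>R tau (e # pb) (min (Suc Nr) Np))"
          proof (rule comb_le[OF c_nn], intro ballI)
            fix e assume e: "e \<in> E"
            define q where "q = e # pb"
            have q: "q \<in> scen_paths np nw Nr" using qE[OF e] q_def by simp
            have "T *v (A i0 *v z q + B i0 *v (vN q + Kpred *v z q) + wv l0)
                = Pm i0 *v (T *v z q) + T *v (B i0 *v vN q) + T *v wv l0"
              unfolding lin3 by (simp only: matrix_vector_right_distrib TPm[OF i0])
            also have "\<dots> \<le> Pm i0 *v tau q Nr + T *v (B i0 *v vN q) + T *v wv l0"
            proof -
              have Tz: "T *v z q \<le> tau q Nr" using leaf q by blast
              have "Pm i0 *v (T *v z q) \<le> Pm i0 *v tau q Nr" using nn_mono Pm_nn i0 Tz by blast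
              then show ?thesis by (intro add_right_mono)
            qed
            also have "\<dots> \<le> tau q (min (Suc Nr) Np)"
            proof (cases "Nr < Np")
              case True then show ?thesis using leaf q i0 l0 by (auto simp: vN_def)
            next
              case False then have "Nr = Np" using horizons by simp
              then show ?thesis using leaf q i0 l0 False by (auto simp: vN_def)
            qed
            finally show "T *v (A i0 *v z (e # pb) + B i0 *v (vN (e # pb) + Kpred *v z (e # pb)) + wv l0)
                \<le> tau (e # pb) (min (Suc Nr) Np)" unfolding q_def .
          qed
          finally show ?thesis by (simp add: tau'p)
        qed
        \<comment> \<open>terminal\<close>
        have tN: "\<And>k. Np \<le> k \<Longrightarrow> tau' p k = (\<Sum>e\<in>E. c e *\<^sub>R tau (e # pb) Np)"
          by (simp add: tau'p min_def)
        have term1: "\<forall>i\<in>{1..np}. \<forall>l\<in>{1..nw}. Pm i *v tau' p Np + T *v wv l \<le> tau' p Np"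
        proof (intro ballI)
          fix i l assume i: "i \<in> {1..np}" and l: "l \<in> {1..nw}"
          have "Pm i *v tau' p Np + T *v wv l = (\<Sum>e\<in>E. c e *\<^sub>R (Pm i *v tau (e # pb) Np + T *v wv l))"
            by (simp add: tN mat_comb scaleR_add_right sum.distrib cc)
          also have "\<dots> \<le> (\<Sum>e\<in>E. c e *\<^sub>R tau (e # pb) Np)"
            using leaf qE i l by (intro comb_le[OF c_nn]) blast
          finally show "Pm i *v tau' p Np + T *v wv l \<le> tau' p Np" by (simp add: tN)
        qed
        have term2: "Px *v tau' p Np \<le> 1"
          using leaf qE by (simp add: tN mat_comb) (intro comb_le_const[OF c_nn c_sum], blast)
        have term3: "Pu *v tau' p Np \<le> 1"
          using leaf qE by (simp add: tN mat_comb) (intro comb_le_const[OF c_nn c_sum], blast)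
        \<comment> \<open>intermediate stages\<close>
        have mid: "(\<forall>i\<in>{1..np}. \<forall>l\<in>{1..nw}.
               Pm i *v tau' p k + T *v (B i *v vt' p k) + T *v wv l \<le> tau' p (Suc k)) \<and>
           Px *v tau' p k \<le> 1 \<and>
           G *v vt' p k + Pu *v tau' p k \<le> 1 \<and>
           (\<exists>y\<in>Zf. \<exists>(mu::real^'r) (eta::real^'s) (gamma::real).
               - mu \<le> PQ *v tau' p k - Q *v y \<and> PQ *v tau' p k - Q *v y \<le> mu \<and>
               - eta \<le> R *v vt' p k \<and> R *v vt' p k \<le> eta \<and>
               (\<Sum>a\<in>UNIV. mu $ a) + (\<Sum>b\<in>UNIV. eta $ b) \<le> gamma)" if k: "k \<in> {Nr..<Np}" for k
        proof (intro conjI)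
          let ?vv = "\<lambda>q. if Suc k < Np then vt q (Suc k) else 0"
          show "\<forall>i\<in>{1..np}. \<forall>l\<in>{1..nw}.
               Pm i *v tau' p k + T *v (B i *v vt' p k) + T *v wv l \<le> tau' p (Suc k)"
          proof (intro ballI)
            fix i l assume i: "i \<in> {1..np}" and l: "l \<in> {1..nw}"
            have "Pm i *v tau' p k + T *v (B i *v vt' p k) + T *v wv l
               = (\<Sum>e\<in>E. c e *\<^sub>R (Pm i *v tau (e # pb) (min (Suc k) Np) + T *v (B i *v ?vv (e # pb)) + T *v wv l))"
              unfolding tau'p vt'p by (simp only: mat_comb scaleR_add_right sum.distrib cc)
            also have "\<dots> \<le> (\<Sum>e\<in>E. c e *\<^sub>R tau (e # pb) (min (Suc (Suc k)) Np))"
            proof (rule comb_le[OF c_nn], intro ballI)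
              fix e assume e: "e \<in> E"
              have q: "e # pb \<in> scen_paths np nw Nr" using qE[OF e] .
              show "Pm i *v tau (e # pb) (min (Suc k) Np) + T *v (B i *v ?vv (e # pb)) + T *v wv l
                  \<le> tau (e # pb) (min (Suc (Suc k)) Np)"
              proof (cases "Suc k < Np")
                case True
                then have "Suc k \<in> {Nr..<Np}" using k by simp
                then show ?thesis using True leaf q i l by (simp add: min_def)
              next
                case False then have "Suc k = Np" using k by simp
                then show ?thesis using leaf q i l by (simp add: min_def)
              qed
            qed
            finally show "Pm i *v tau' p k + T *v (B i *v vt' p k) + T *v wv l \<le> tau' p (Suc k)"
              by (simp add: tau'p)
          qed
          show "Px *v tau' p k \<le> 1"
            unfolding tau'p mat_comb
            using Pxq qE k by (intro comb_le_const[OF c_nn c_sum] ballI) simp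
          have "G *v vt' p k + Pu *v tau' p k = (\<Sum>e\<in>E. c e *\<^sub>R (G *v ?vv (e # pb) + Pu *v tau (e # pb) (min (Suc k) Np)))"
            unfolding tau'p vt'p by (simp only: mat_comb scaleR_add_right sum.distrib)
          also have "\<dots> \<le> 1"
          proof (rule comb_le_const[OF c_nn c_sum], intro ballI)
            fix e assume e: "e \<in> E"
            have q: "e # pb \<in> scen_paths np nw Nr" using qE[OF e] .
            show "G *v ?vv (e # pb) + Pu *v tau (e # pb) (min (Suc k) Np) \<le> 1"
            proof (cases "Suc k < Np")
              case True
              then have "Suc k \<in> {Nr..<Np}" using k by simp
              then show ?thesis using True leaf q by (simp add: min_def)
            next
              case False then have "Suc k = Np" using k by simp
              then show ?thesis using leaf q by (simp add: min_def)
            qed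
          qed
          finally show "G *v vt' p k + Pu *v tau' p k \<le> 1" .
          let ?d = "PQ *v tau' p k - Q *v 0"
          let ?r = "R *v vt' p k"
          show "\<exists>y\<in>Zf. \<exists>(mu::real^'r) (eta::real^'s) (gamma::real).
               - mu \<le> PQ *v tau' p k - Q *v y \<and> PQ *v tau' p k - Q *v y \<le> mu \<and>
               - eta \<le> R *v vt' p k \<and> R *v vt' p k \<le> eta \<and>
               (\<Sum>a\<in>UNIV. mu $ a) + (\<Sum>b\<in>UNIV. eta $ b) \<le> gamma"
          proof (rule bexI[OF _ Zf_0], intro exI conjI)
            show "- (\<chi> a. \<bar>?d $ a\<bar>) \<le> ?d" "?d \<le> (\<chi> a. \<bar>?d $ a\<bar>)" using abs_bound[of ?d] by auto
            show "- (\<chi> a. \<bar>?r $ a\<bar>) \<le> ?r" "?r \<le> (\<chi> a. \<bar>?r $ a\<bar>)" using abs_bound[of ?r] by auto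
          qed (rule order_refl)
        qed
        show "T *v z' p \<le> tau' p Nr \<and>
        (\<forall>k\<in>{Nr..<Np}.
           (\<forall>i\<in>{1..np}. \<forall>l\<in>{1..nw}.
               Pm i *v tau' p k + T *v (B i *v vt' p k) + T *v wv l \<le> tau' p (Suc k)) \<and>
           Px *v tau' p k \<le> 1 \<and>
           G *v vt' p k + Pu *v tau' p k \<le> 1 \<and>
           (\<exists>y\<in>Zf. \<exists>(mu::real^'r) (eta::real^'s) (gamma::real).
               - mu \<le> PQ *v tau' p k - Q *v y \<and> PQ *v tau' p k - Q *v y \<le> mu \<and>
               - eta \<le> R *v vt' p k \<and> R *v vt' p k \<le> eta \<and>
               (\<Sum>a\<in>UNIV. mu $ a) + (\<Sum>b\<in>UNIV. eta $ b) \<le> gamma)) \<and>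
        (\<forall>i\<in>{1..np}. \<forall>l\<in>{1..nw}. Pm i *v tau' p Np + T *v wv l \<le> tau' p Np) \<and>
        Px *v tau' p Np \<le> 1 \<and> Pu *v tau' p Np \<le> 1"
          using tube0 mid term1 term2 term3 by blast
      qed
    qed
  qed
qed

end
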